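(* Let $n\geq 3$ and $m\geq 1$. The matching $\mu$ on the face poset of $\Delta_m^{n,2}$ has no critical cells of dimension $0$ or $1$.
   Context: $\Delta_m^{n,2}=\mathrm{VR}(\{0,\ldots,m\}^n;2)$, where $\{0,\ldots,m\}^n$ carries the Manhattan metric $d(x,y)=\sum_i|x_i-y_i|$ and $\mathrm{VR}(X;r)$ is the complex of finite subsets of diameter $\leq r$. Order the vertices as $v_1\prec v_2\prec\cdots\prec v_N$ ($N=(m+1)^n$) in the anti-lexicographic order ($x\prec y$ iff at the largest index $i$ with $x_i\neq y_i$, $x_i<y_i$). Let $T_0$ be the set of all simplices of $\Delta_m^{n,2}$, including the empty simplex. For $i=1,\ldots,N$ put $S_i=\{\sigma\in T_{i-1}: v_i\notin\sigma,\ \sigma\cup\{v_i\}\in T_{i-1}\}$, $\mu(\sigma)=\sigma\cup\{v_i\}$ for $\sigma\in S_i$, and $T_i=T_{i-1}\setminus(S_i\cup\{\sigma\cup\{v_i\}:\sigma\in S_i\})$. The critical cells of $\mu$ are the simplices in $T_N$; the dimension of a simplex is its cardinality minus one. *)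

theory Defs
  imports Main
begin

definition grid :: "nat \<Rightarrow> nat \<Rightarrow> nat list set" where
  "grid n m = {x. length x = n \<and> (\<forall>i<n. x ! i \<le> m)}"

definition manhattan :: "nat list \<Rightarrow> nat list \<Rightarrow> int" where
  "manhattan x y = (\<Sum>i<length x. \<bar>int (x ! i) - int (y ! i)\<bar>)"

text \<open>Simplices of VR({0..m}^n; 2): finite subsets (incl. the empty one) of diameter at most 2.\<close>
definition VR2 :: "nat \<Rightarrow> nat \<Rightarrow> nat list set set" where
  "VR2 n m = {\<sigma>. \<sigma> \<subseteq> grid n m \<and> finite \<sigma> \<and> (\<forall>x\<in>\<sigma>. \<forall>y\<in>\<sigma>. manhattan x y \<le> 2)}"

definition antilex_less :: "nat list \<Rightarrow> nat list \<Rightarrow> bool" where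
  "antilex_less x y \<longleftrightarrow> length x = length y \<and>
     (\<exists>i<length x. x ! i < y ! i \<and> (\<forall>j. i < j \<and> j < length x \<longrightarrow> x ! j = y ! j))"

definition vertex_list :: "nat \<Rightarrow> nat \<Rightarrow> nat list list" where
  "vertex_list n m = (THE vs. set vs = grid n m \<and> sorted_wrt antilex_less vs)"

text \<open>One step of the matching: T_i from T_{i-1} using vertex v_i.\<close>
definition match_S :: "nat list \<Rightarrow> nat list set set \<Rightarrow> nat list set set" where
  "match_S v T = {\<sigma> \<in> T. v \<notin> \<sigma> \<and> insert v \<sigma> \<in> T}"

definition match_step :: "nat list \<Rightarrow> nat list set set \<Rightarrow> nat list set set" where
  "match_step v T = T - (match_S v T \<union> (insert v) ` match_S v T)"

definition critical_cells :: "nat \<Rightarrow> nat \<Rightarrow> nat list set set" where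
  "critical_cells n m = fold match_step (vertex_list n m) (VR2 n m)"

end

theory Submission
  imports Defs
begin


lemma al_irrefl: "\<not> antilex_less x x" by (auto simp: antilex_less_def)

lemma al_trans: assumes "antilex_less x y" "antilex_less y z" shows "antilex_less x z"
proof -
  from assms(1) obtain i where i: "length x = length y" "i < length x" "x!i < y!i"
    "\<forall>j. i < j \<and> j < length x \<longrightarrow> x ! j = y ! j" by (auto simp: antilex_less_def)
  from assms(2) obtain k where k: "length y = length z" "k < length y" "y!k < z!k"
    "\<forall>j. k < j \<and> j < length y \<longrightarrow> y ! j = z ! j" by (auto simp: antilex_less_def)
  show ?thesis
  proof (cases i k rule: linorder_cases)
    case less
    then show ?thesis using i k unfolding antilex_less_def
      by (intro conjI exI[of _ k]) auto
  next
    case equal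
    then show ?thesis using i k unfolding antilex_less_def
      by (intro conjI exI[of _ k]) auto
  next
    case greater
    then show ?thesis using i k unfolding antilex_less_def
      by (intro conjI exI[of _ i]) auto
  qed
qed

lemma al_asym: "antilex_less x y \<Longrightarrow> \<not> antilex_less y x"
  using al_trans al_irrefl by blast

lemma al_total: assumes "length x = length y" "x \<noteq> y"
  shows "antilex_less x y \<or> antilex_less y x"
proof -
  define D where "D = {i. i < length x \<and> x!i \<noteq> y!i}"
  have "D \<noteq> {}" using assms nth_equalityI unfolding D_def by blast
  moreover have "finite D" unfolding D_def by auto
  ultimately have iD: "Max D \<in> D" and mx: "\<And>j. j \<in> D \<Longrightarrow> j \<le> Max D" by auto
  define i where "i = Max D"
  have eq: "\<forall>j. i < j \<and> j < length x \<longrightarrow> x ! j = y ! j"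
  proof (intro allI impI)
    fix j assume "i < j \<and> j < length x"
    then show "x ! j = y ! j" using mx[of j] unfolding i_def D_def by fastforce
  qed
  have "i < length x" "x!i \<noteq> y!i" using iD unfolding i_def D_def by auto
  then show ?thesis using eq assms(1) unfolding antilex_less_def
    by (cases "x!i < y!i") (auto intro!: exI[of _ i])
qed

lemma exists_sorted:
  assumes "finite A" "\<forall>x\<in>A. \<forall>y\<in>A. x \<noteq> y \<longrightarrow> R x y \<or> R y x"
    "\<And>x y z. R x y \<Longrightarrow> R y z \<Longrightarrow> R x z"
  shows "\<exists>xs. set xs = A \<and> sorted_wrt R xs"
  using assms(1,2)
proof (induction A rule: finite_induct)
  case empty
  then show ?case by auto
next
  case (insert x A)
  then obtain xs where xs: "set xs = A" "sorted_wrt R xs" by auto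
  define xs1 where "xs1 = filter (\<lambda>y. R y x) xs"
  define xs2 where "xs2 = filter (\<lambda>y. \<not> R y x) xs"
  have "set (xs1 @ x # xs2) = insert x A" using xs unfolding xs1_def xs2_def by auto
  moreover have "sorted_wrt R (xs1 @ x # xs2)"
  proof -
    have s1: "sorted_wrt R xs1" "sorted_wrt R xs2" unfolding xs1_def xs2_def
      using xs(2) by (auto simp: sorted_wrt_filter)
    have x2: "\<forall>z\<in>set xs2. R x z" using insert xs unfolding xs2_def by auto
    have "\<forall>y\<in>set xs1. \<forall>z\<in>set (x#xs2). R y z" using x2 assms(3) unfolding xs1_def by auto
    then show ?thesis using s1 x2 by (auto simp: sorted_wrt_append)
  qed
  ultimately show ?case by blast
qed

lemma sorted_unique:
  assumes "\<And>x y. R x y \<Longrightarrow> \<not> R y x"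
  shows "sorted_wrt R xs \<Longrightarrow> sorted_wrt R ys \<Longrightarrow> set xs = set ys \<Longrightarrow> xs = ys"
proof (induction xs arbitrary: ys)
  case Nil
  then show ?case by auto
next
  case (Cons x xs)
  then obtain y ys' where ys: "ys = y # ys'" by (cases ys) auto
  have nx: "x \<notin> set xs" using Cons.prems(1) assms by auto
  have ny: "y \<notin> set ys'" using Cons.prems(2) assms ys by auto
  have xy: "x = y"
  proof (rule ccontr)
    assume "x \<noteq> y"
    then have "x \<in> set ys'" "y \<in> set xs" using Cons.prems(3) ys by auto
    then have "R y x" "R x y" using Cons.prems(1,2) ys by auto
    then show False using assms by blast
  qed
  have "set xs = set ys'" using Cons.prems(3) ys xy nx ny by auto
  then show ?case using Cons ys xy by auto
qed

lemma finite_grid: "finite (grid n m)"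
proof -
  have "grid n m \<subseteq> {xs. set xs \<subseteq> {0..m} \<and> length xs = n}"
    unfolding grid_def by (auto simp: in_set_conv_nth)
  then show ?thesis using finite_subset finite_lists_length_eq by blast
qed

lemma vertex_list: "set (vertex_list n m) = grid n m \<and> sorted_wrt antilex_less (vertex_list n m)"
proof -
  have tot: "\<forall>x\<in>grid n m. \<forall>y\<in>grid n m. x \<noteq> y \<longrightarrow> antilex_less x y \<or> antilex_less y x"
    using al_total unfolding grid_def by auto
  obtain xs where xs: "set xs = grid n m" "sorted_wrt antilex_less xs"
    using exists_sorted[OF finite_grid tot] al_trans by blast
  have "set ys = grid n m \<and> sorted_wrt antilex_less ys \<Longrightarrow> ys = xs" for ys
    using xs sorted_unique[of antilex_less ys xs] al_asym by blast
  then show ?thesis unfolding vertex_list_def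
    using theI[of "\<lambda>vs. set vs = grid n m \<and> sorted_wrt antilex_less vs" xs] xs by blast
qed



lemma mstep_mem: "\<sigma> \<in> match_step v T \<longleftrightarrow>
   \<sigma> \<in> T \<and> \<not>(v \<notin> \<sigma> \<and> insert v \<sigma> \<in> T) \<and> \<not>(v \<in> \<sigma> \<and> \<sigma> - {v} \<in> T)"
proof -
  have img: "\<sigma> \<in> insert v ` {\<tau> \<in> T. v \<notin> \<tau> \<and> insert v \<tau> \<in> T} \<longleftrightarrow> (v \<in> \<sigma> \<and> \<sigma> - {v} \<in> T \<and> \<sigma> \<in> T)"
  proof
    assume "\<sigma> \<in> insert v ` {\<tau> \<in> T. v \<notin> \<tau> \<and> insert v \<tau> \<in> T}"
    then obtain \<tau> where t: "\<tau> \<in> T" "v \<notin> \<tau>" "insert v \<tau> \<in> T" "\<sigma> = insert v \<tau>" by blast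
    then have "\<sigma> - {v} = \<tau>" by auto
    then show "v \<in> \<sigma> \<and> \<sigma> - {v} \<in> T \<and> \<sigma> \<in> T" using t by simp
  next
    assume a: "v \<in> \<sigma> \<and> \<sigma> - {v} \<in> T \<and> \<sigma> \<in> T"
    then have "\<sigma> = insert v (\<sigma> - {v})" by auto
    then show "\<sigma> \<in> insert v ` {\<tau> \<in> T. v \<notin> \<tau> \<and> insert v \<tau> \<in> T}" using a
      by (metis (mono_tags, lifting) Diff_iff image_eqI insertI1 mem_Collect_eq)
  qed
  show ?thesis unfolding match_step_def match_S_def using img by blast
qed

lemma fold_sub: "fold match_step xs T \<subseteq> T"
proof (induction xs arbitrary: T)
  case Nil then show ?case by simp
next
  case (Cons a xs)
  have "match_step a T \<subseteq> T" by (auto simp: mstep_mem)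
  then show ?case using Cons[of "match_step a T"] by simp
qed

lemma keep:
  assumes "F \<subseteq> T" "T \<subseteq> K" "\<forall>u\<in>set xs. \<forall>\<sigma>\<in>F. u \<notin> \<sigma> \<and> insert u \<sigma> \<notin> K"
  shows "F \<subseteq> fold match_step xs T"
  using assms
proof (induction xs arbitrary: T)
  case Nil then show ?case by simp
next
  case (Cons a xs)
  have "F \<subseteq> match_step a T"
  proof
    fix x assume x: "x \<in> F"
    then have "x \<in> T" "a \<notin> x" "insert a x \<notin> T" using Cons.prems by auto
    then show "x \<in> match_step a T" by (simp add: mstep_mem)
  qed
  moreover have "match_step a T \<subseteq> K" using Cons.prems by (auto simp: mstep_mem)
  ultimately show ?case using Cons.IH[of "match_step a T"] Cons.prems by simp
qed

lemma removeA:
  assumes "vs = xs @ v # ys" "\<tau> \<in> K" "insert v \<tau> \<in> K" "v \<notin> \<tau>"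
    "\<forall>u\<in>set xs. u \<notin> \<tau> \<and> insert u \<tau> \<notin> K \<and> insert u (insert v \<tau>) \<notin> K"
  shows "\<tau> \<notin> fold match_step vs K \<and> insert v \<tau> \<notin> fold match_step vs K"
proof -
  have "{\<tau>, insert v \<tau>} \<subseteq> fold match_step xs K"
    apply (rule keep) using assms(2-5) by auto
  then have "\<tau> \<notin> match_step v (fold match_step xs K) \<and> insert v \<tau> \<notin> match_step v (fold match_step xs K)"
    using assms(4) by (auto simp: mstep_mem)
  moreover have "fold match_step vs K = fold match_step ys (match_step v (fold match_step xs K))"
    using assms(1) by simp
  ultimately show ?thesis using fold_sub by blast
qed

lemma manhattan_sym: "length x = length y \<Longrightarrow> manhattan x y = manhattan y x"
  unfolding manhattan_def by (simp add: abs_minus_commute)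

lemma manhattan_self: "manhattan x x = 0"
  unfolding manhattan_def by simp

lemma VR2_empty: "{} \<in> VR2 n m" unfolding VR2_def by auto

lemma VR2_insert: "insert u \<tau> \<in> VR2 n m \<longleftrightarrow>
   \<tau> \<in> VR2 n m \<and> u \<in> grid n m \<and> (\<forall>y\<in>\<tau>. manhattan u y \<le> 2)"
proof
  assume "insert u \<tau> \<in> VR2 n m"
  then show "\<tau> \<in> VR2 n m \<and> u \<in> grid n m \<and> (\<forall>y\<in>\<tau>. manhattan u y \<le> 2)"
    unfolding VR2_def by auto
next
  assume a: "\<tau> \<in> VR2 n m \<and> u \<in> grid n m \<and> (\<forall>y\<in>\<tau>. manhattan u y \<le> 2)"
  have "\<forall>y\<in>\<tau>. manhattan y u \<le> 2"
  proof
    fix y assume y: "y \<in> \<tau>"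
    then have "length y = length u" using a unfolding VR2_def grid_def by auto
    then show "manhattan y u \<le> 2" using manhattan_sym[of y u] a y by simp
  qed
  then show "insert u \<tau> \<in> VR2 n m" using a manhattan_self[of u] unfolding VR2_def by auto
qed

lemma VR2_down: "\<sigma> \<in> VR2 n m \<Longrightarrow> \<tau> \<subseteq> \<sigma> \<Longrightarrow> \<tau> \<in> VR2 n m"
  unfolding VR2_def by (auto intro: finite_subset)



lemma sum_save:
  fixes f g :: "nat \<Rightarrow> int"
  assumes "p < n" "\<And>i. i < n \<Longrightarrow> i \<noteq> p \<Longrightarrow> f i \<le> g i" "f p + k \<le> g p"
  shows "sum f {..<n} + k \<le> sum g {..<n}"
proof -
  have "sum f ({..<n} - {p}) \<le> sum g ({..<n} - {p})" using assms(2) by (intro sum_mono) auto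
  moreover have "sum f {..<n} = f p + sum f ({..<n} - {p})" "sum g {..<n} = g p + sum g ({..<n} - {p})"
    using assms(1) by (auto intro: sum.remove)
  ultimately show ?thesis using assms(3) by linarith
qed

lemma sum_save2:
  fixes f g :: "nat \<Rightarrow> int"
  assumes "p < n" "r < n" "p \<noteq> r" "\<And>i. i < n \<Longrightarrow> i \<noteq> p \<Longrightarrow> i \<noteq> r \<Longrightarrow> f i \<le> g i"
    "f p + k1 \<le> g p" "f r + k2 \<le> g r"
  shows "sum f {..<n} + k1 + k2 \<le> sum g {..<n}"
proof -
  have "sum f ({..<n} - {p} - {r}) \<le> sum g ({..<n} - {p} - {r})" using assms(4) by (intro sum_mono) auto
  moreover have "sum f {..<n} = f p + sum f ({..<n} - {p})" "sum g {..<n} = g p + sum g ({..<n} - {p})"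
    using assms(1) by (auto intro: sum.remove)
  moreover have "sum f ({..<n} - {p}) = f r + sum f ({..<n} - {p} - {r})"
    "sum g ({..<n} - {p}) = g r + sum g ({..<n} - {p} - {r})"
    using assms(2,3) by (auto intro: sum.remove)
  ultimately show ?thesis using assms(5,6) by linarith
qed

lemma geo:
  assumes ga: "a \<in> grid n m" and gb: "b \<in> grid n m" and gu: "u \<in> grid n m"
    and ab: "antilex_less a b" and ua: "antilex_less u a"
    and dab: "manhattan a b \<le> 2" and dub: "manhattan u b \<le> 2"
  shows "\<exists>c\<in>grid n m. antilex_less c a \<and> manhattan c a \<le> 2 \<and> manhattan c b \<le> 2"
proof -
  have la: "length a = n" and lb: "length b = n" and lu: "length u = n"
    and ma: "\<And>i. i < n \<Longrightarrow> a!i \<le> m" and mb: "\<And>i. i < n \<Longrightarrow> b!i \<le> m"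
    using ga gb gu unfolding grid_def by auto
  from ab obtain p where p: "p < n" "a!p < b!p" "\<And>j. p < j \<Longrightarrow> j < n \<Longrightarrow> a ! j = b ! j"
    using la unfolding antilex_less_def by auto
  from ua obtain r where r: "r < n" "u!r < a!r" "\<And>j. r < j \<Longrightarrow> j < n \<Longrightarrow> u ! j = a ! j"
    using lu unfolding antilex_less_def by auto
  show ?thesis
  proof (cases "r \<le> p")
    case True
    define f where "f i = \<bar>int (u!i) - int (a!i)\<bar>" for i
    define g where "g i = \<bar>int (u!i) - int (b!i)\<bar> + \<bar>int (b!i) - int (a!i)\<bar>" for i
    have "sum f {..<n} + 2 \<le> sum g {..<n}"
    proof (rule sum_save[OF p(1)])
      show "f i \<le> g i" for i unfolding f_def g_def by linarith
      show "f p + 2 \<le> g p"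
      proof (cases "r = p")
        case True
        then have "u!p < a!p" using r by simp
        then show ?thesis unfolding f_def g_def using p by linarith
      next
        case False
        then have "u!p = a!p" using r(3)[of p] True p by auto
        then show ?thesis unfolding f_def g_def using p by linarith
      qed
    qed
    moreover have "sum g {..<n} = manhattan u b + manhattan b a"
      unfolding g_def manhattan_def using lu lb by (simp add: sum.distrib)
    moreover have "manhattan b a = manhattan a b" using manhattan_sym la lb by metis
    moreover have "sum f {..<n} = manhattan u a" unfolding f_def manhattan_def using lu by simp
    ultimately have "manhattan u a \<le> 2" using dab dub by linarith
    then show ?thesis using gu ua dub by blast
  next
    case False
    then have pr: "p < r" by simp
    define c where "c = a[p := a!p + 1, r := a!r - 1]"
    have lc: "length c = n" unfolding c_def using la by simp
    have cn: "\<And>i. i < n \<Longrightarrow> c!i = (if i = r then a!r - 1 else if i = p then a!p + 1 else a!i)"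
      unfolding c_def using la pr by auto
    have "c!i \<le> m" if i: "i < n" for i
    proof -
      have "a!r - 1 \<le> m" using ma[OF r(1)] by linarith
      moreover have "a!p + 1 \<le> m" using mb[OF p(1)] p(2) by linarith
      ultimately show ?thesis using cn[OF i] ma[OF i] by auto
    qed
    then have gc: "c \<in> grid n m" unfolding grid_def using lc by auto
    have "antilex_less c a" unfolding antilex_less_def using lc la r cn pr
      by (intro conjI exI[of _ r]) auto
    moreover have "manhattan c a \<le> 2"
    proof -
      have "sum (\<lambda>i. \<bar>int (c!i) - int (a!i)\<bar>) {..<n} + (-1) + (-1) \<le> sum (\<lambda>i. 0) {..<n}"
        apply (rule sum_save2[OF p(1) r(1)])
        using pr cn r by auto
      then show ?thesis unfolding manhattan_def using lc by simp
    qed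
    moreover have "manhattan c b \<le> 2"
    proof -
      have "sum (\<lambda>i. \<bar>int (c!i) - int (b!i)\<bar>) {..<n} + 1 + (-1) \<le> sum (\<lambda>i. \<bar>int (a!i) - int (b!i)\<bar>) {..<n}"
        apply (rule sum_save2[OF p(1) r(1)])
        using pr cn r p by auto
      then show ?thesis unfolding manhattan_def using lc la dab unfolding manhattan_def by simp
    qed
    ultimately show ?thesis using gc by blast
  qed
qed

lemma geo_single:
  assumes gw: "w \<in> grid n m" and nz: "w \<noteq> replicate n 0"
  shows "\<exists>c\<in>grid n m. antilex_less c w \<and> manhattan c w \<le> 2"
proof -
  have lw: "length w = n" and mw: "\<And>i. i < n \<Longrightarrow> w!i \<le> m" using gw unfolding grid_def by auto
  obtain l where l: "l < n" "w!l > 0"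
    using nz lw by (metis gr0I length_replicate nth_equalityI nth_replicate)
  define c where "c = w[l := w!l - 1]"
  have lc: "length c = n" unfolding c_def using lw by simp
  have cn: "\<And>i. i < n \<Longrightarrow> c!i = (if i = l then w!l - 1 else w!i)"
    unfolding c_def using lw by auto
  have gc: "c \<in> grid n m" unfolding grid_def using lc cn mw by (auto intro: le_trans[OF diff_le_self])
  have "antilex_less c w" unfolding antilex_less_def using lc lw l cn
    by (intro conjI exI[of _ l]) auto
  moreover have "manhattan c w \<le> 2"
  proof -
    have "sum (\<lambda>i. \<bar>int (c!i) - int (w!i)\<bar>) {..<n} + (-1) \<le> sum (\<lambda>i. 0) {..<n}"
      apply (rule sum_save[OF l(1)])
      using cn l by auto
    then show ?thesis unfolding manhattan_def using lc by simp
  qed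
  ultimately show ?thesis using gc by blast
qed

lemma zero_min: "\<not> antilex_less u (replicate n 0)"
  unfolding antilex_less_def by auto

lemma zero_grid: "replicate n 0 \<in> grid n m" unfolding grid_def by auto



lemma vl_set: "set (vertex_list n m) = grid n m" using vertex_list by blast
lemma vl_sorted: "sorted_wrt antilex_less (vertex_list n m)" using vertex_list by blast

lemma vl_split: assumes "vertex_list n m = xs @ v # ys"
  shows "\<forall>u\<in>set xs. antilex_less u v" "\<forall>u\<in>set ys. antilex_less v u"
    "set xs \<subseteq> grid n m" "v \<in> grid n m" "set ys \<subseteq> grid n m"
proof -
  have "sorted_wrt antilex_less (xs @ v # ys)" using vl_sorted[of n m] assms by simp
  then show "\<forall>u\<in>set xs. antilex_less u v" "\<forall>u\<in>set ys. antilex_less v u"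
    by (simp_all add: sorted_wrt_append)
  have "set (xs @ v # ys) = grid n m" using vl_set[of n m] assms by simp
  then show "set xs \<subseteq> grid n m" "v \<in> grid n m" "set ys \<subseteq> grid n m" by auto
qed

lemma vl_before: "vertex_list n m = xs @ v # ys \<Longrightarrow> u \<in> set xs \<Longrightarrow> antilex_less u v"
  using vl_split(1) by blast

lemma vl_after: assumes "vertex_list n m = xs @ v # ys" "u \<in> grid n m" "antilex_less u v"
  shows "u \<in> set xs"
proof -
  have "set (xs @ v # ys) = grid n m" using vl_set[of n m] assms by simp
  then have "u \<in> set (xs @ v # ys)" using assms(2) by blast
  moreover have "u \<noteq> v" using assms(3) al_irrefl by blast
  moreover have "u \<notin> set ys"
  proof
    assume "u \<in> set ys"
    then have "antilex_less v u" using vl_split(2)[OF assms(1)] by blast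
    then show False using assms(3) al_asym by blast
  qed
  ultimately show ?thesis by auto
qed

lemma ins_notK: "insert u \<tau> \<notin> VR2 n m \<Longrightarrow> insert u (insert v \<tau>) \<notin> VR2 n m"
  using VR2_down[of "insert u (insert v \<tau>)" n m "insert u \<tau>"] by blast

lemma single_gone:
  assumes gw: "w \<in> grid n m"
  shows "{w} \<notin> fold match_step (vertex_list n m) (VR2 n m)"
proof -
  let ?vs = "vertex_list n m" and ?K = "VR2 n m"
  define P where "P u \<longleftrightarrow> u = w \<or> insert u {w} \<in> ?K" for u
  have "w \<in> set ?vs" using gw vl_set by blast
  then have "\<exists>x\<in>set ?vs. P x" unfolding P_def by blast
  from split_list_first_prop[OF this] obtain xs v ys where sp: "?vs = xs @ v # ys" "P v" "\<forall>y\<in>set xs. \<not> P y"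
    by blast
  have wK: "{w} \<in> ?K" using gw by (simp add: VR2_insert VR2_empty)
  show ?thesis
  proof (cases "v = w")
    case False
    have "{w} \<notin> fold match_step ?vs ?K \<and> insert v {w} \<notin> fold match_step ?vs ?K"
    proof (rule removeA[OF sp(1) wK])
      show "insert v {w} \<in> ?K" using sp(2) False unfolding P_def by simp
      show "v \<notin> {w}" using False by auto
      show "\<forall>u\<in>set xs. u \<notin> {w} \<and> insert u {w} \<notin> ?K \<and> insert u (insert v {w}) \<notin> ?K"
      proof
        fix u assume "u \<in> set xs"
        then have "\<not> P u" using sp(3) by blast
        then have h: "u \<noteq> w" "insert u {w} \<notin> ?K" unfolding P_def by auto
        then show "u \<notin> {w} \<and> insert u {w} \<notin> ?K \<and> insert u (insert v {w}) \<notin> ?K"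
          using ins_notK[OF h(2)] by simp
      qed
    qed
    then show ?thesis by blast
  next
    case True
    show ?thesis
    proof (cases "w = replicate n 0")
      case z: True
      have xs: "xs = []"
      proof (rule ccontr)
        assume "xs \<noteq> []"
        then obtain u where "u \<in> set xs" by (cases xs) auto
        then have "antilex_less u w" using vl_before sp(1) True by blast
        then show False using z zero_min[of u n] by simp
      qed
      have "{} \<notin> fold match_step ?vs ?K \<and> insert v {} \<notin> fold match_step ?vs ?K"
        apply (rule removeA[OF sp(1) VR2_empty])
        using True wK xs by auto
      then show ?thesis using True by blast
    next
      case False
      obtain c where c: "c \<in> grid n m" "antilex_less c w" "manhattan c w \<le> 2"
        using geo_single[OF gw False] by blast
      have "c \<in> set xs" using vl_after[OF sp(1) c(1)] c(2) True by blast
      moreover have "P c" unfolding P_def using c wK by (simp add: VR2_insert)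
      ultimately show ?thesis using sp(3) by blast
    qed
  qed
qed

lemma edge_gone:
  assumes ga: "a \<in> grid n m" and gb: "b \<in> grid n m" and ab: "antilex_less a b"
    and dab: "manhattan a b \<le> 2"
  shows "{a,b} \<notin> fold match_step (vertex_list n m) (VR2 n m)"
proof -
  let ?vs = "vertex_list n m" and ?K = "VR2 n m"
  have abK: "{a,b} \<in> ?K" using ga gb dab by (simp add: VR2_insert VR2_empty)
  have bK: "{b} \<in> ?K" using gb by (simp add: VR2_insert VR2_empty)
  have ins: "insert c {a,b} \<in> ?K \<longleftrightarrow> c \<in> grid n m \<and> manhattan c a \<le> 2 \<and> manhattan c b \<le> 2" for c
    using abK by (simp add: VR2_insert)
  show ?thesis
  proof (cases "\<exists>c\<in>grid n m. antilex_less c a \<and> manhattan c a \<le> 2 \<and> manhattan c b \<le> 2")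
    case True
    then obtain c where c: "c \<in> grid n m" "antilex_less c a" "manhattan c a \<le> 2" "manhattan c b \<le> 2"
      by blast
    define P where "P u \<longleftrightarrow> u \<in> {a,b} \<or> insert u {a,b} \<in> ?K" for u
    have "c \<in> set ?vs" using c vl_set by blast
    moreover have "P c" using c ins unfolding P_def by blast
    ultimately have "\<exists>x\<in>set ?vs. P x" by blast
    from split_list_first_prop[OF this] obtain xs v ys where sp: "?vs = xs @ v # ys" "P v" "\<forall>y\<in>set xs. \<not> P y"
      by blast
    have "c \<notin> set xs" using sp(3) \<open>P c\<close> by blast
    moreover have "c \<in> set (xs @ v # ys)" using \<open>c \<in> set ?vs\<close> sp(1) by simp
    ultimately have "c = v \<or> c \<in> set ys" by auto
    then have "c = v \<or> antilex_less v c" using vl_split(2)[OF sp(1)] by blast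
    then have va: "antilex_less v a" using c(2) al_trans by blast
    then have vb: "antilex_less v b" using ab al_trans by blast
    have vnot: "v \<notin> {a,b}" using va vb al_irrefl by blast
    have "{a,b} \<notin> fold match_step ?vs ?K \<and> insert v {a,b} \<notin> fold match_step ?vs ?K"
    proof (rule removeA[OF sp(1) abK _ vnot])
      show "insert v {a,b} \<in> ?K" using sp(2) vnot unfolding P_def by auto
      show "\<forall>u\<in>set xs. u \<notin> {a,b} \<and> insert u {a,b} \<notin> ?K \<and> insert u (insert v {a,b}) \<notin> ?K"
      proof
        fix u assume "u \<in> set xs"
        then have "\<not> P u" using sp(3) by blast
        then have h: "u \<notin> {a,b}" "insert u {a,b} \<notin> ?K" unfolding P_def by auto
        then show "u \<notin> {a,b} \<and> insert u {a,b} \<notin> ?K \<and> insert u (insert v {a,b}) \<notin> ?K"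
          using ins_notK[OF h(2)] by simp
      qed
    qed
    then show ?thesis by blast
  next
    case False
    have "a \<in> set ?vs" using ga vl_set by blast
    from split_list[OF this] obtain xs ys where sp: "?vs = xs @ a # ys" by blast
    have "{b} \<notin> fold match_step ?vs ?K \<and> insert a {b} \<notin> fold match_step ?vs ?K"
    proof (rule removeA[OF sp(1) bK])
      show "insert a {b} \<in> ?K" using abK by (simp add: insert_commute)
      show "a \<notin> {b}" using ab al_irrefl by auto
      show "\<forall>u\<in>set xs. u \<notin> {b} \<and> insert u {b} \<notin> ?K \<and> insert u (insert a {b}) \<notin> ?K"
      proof
        fix u assume u: "u \<in> set xs"
        then have ua: "antilex_less u a" using vl_before sp(1) by blast
        have gu: "u \<in> grid n m" using u vl_split(3)[OF sp(1)] by blast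
        have "u \<noteq> b" using ua ab al_asym by blast
        moreover have "insert u {b} \<notin> ?K"
        proof
          assume "insert u {b} \<in> ?K"
          then have "manhattan u b \<le> 2" by (simp add: VR2_insert)
          then show False using geo[OF ga gb gu ab ua dab] False by blast
        qed
        moreover have "insert u (insert a {b}) \<notin> ?K"
        proof
          assume "insert u (insert a {b}) \<in> ?K"
          then have "manhattan u a \<le> 2" "manhattan u b \<le> 2" by (simp_all add: VR2_insert)
          then show False using False gu ua by blast
        qed
        ultimately show "u \<notin> {b} \<and> insert u {b} \<notin> ?K \<and> insert u (insert a {b}) \<notin> ?K" by simp
      qed
    qed
    then show ?thesis by blast
  qed
qed

theorem lemma4p8:
  fixes n m :: nat
  assumes "n \<ge> 3" and "m \<ge> 1"
  shows "\<forall>\<sigma> \<in> critical_cells n m. card \<sigma> \<noteq> 1 \<and> card \<sigma> \<noteq> 2"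
proof
  fix \<sigma> assume s: "\<sigma> \<in> critical_cells n m"
  have sub: "critical_cells n m \<subseteq> VR2 n m" unfolding critical_cells_def by (rule fold_sub)
  have sK: "\<sigma> \<in> VR2 n m" using s sub by blast
  have cc: "critical_cells n m = fold match_step (vertex_list n m) (VR2 n m)"
    unfolding critical_cells_def by simp
  show "card \<sigma> \<noteq> 1 \<and> card \<sigma> \<noteq> 2"
  proof
    show "card \<sigma> \<noteq> 1"
    proof
      assume c: "card \<sigma> = 1"
      obtain w where w: "\<sigma> = {w}" using card_1_singletonE[OF c] by blast
      have g: "w \<in> grid n m" using sK w by (simp add: VR2_insert)
      have "{w} \<notin> critical_cells n m" using single_gone[OF g] cc by simp
      then show False using s w by simp
    qed
    show "card \<sigma> \<noteq> 2"
    proof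
      assume c: "card \<sigma> = 2"
      obtain a b where w: "\<sigma> = {a,b}" "a \<noteq> b" using c card_2_iff[of \<sigma>] by blast
      have g: "a \<in> grid n m" "b \<in> grid n m" and d: "manhattan a b \<le> 2"
        using sK w by (simp_all add: VR2_insert)
      have la: "length a = length b" using g unfolding grid_def by simp
      have d2: "manhattan b a \<le> 2" using d manhattan_sym[OF la] by simp
      have "antilex_less a b \<or> antilex_less b a" using al_total[OF la w(2)] .
      then show False
      proof
        assume "antilex_less a b"
        then have "{a,b} \<notin> critical_cells n m" using edge_gone[OF g(1) g(2) _ d] cc by simp
        then show False using s w by simp
      next
        assume "antilex_less b a"
        then have "{b,a} \<notin> critical_cells n m" using edge_gone[OF g(2) g(1) _ d2] cc by simp
        then show False using s w by (simp add: insert_commute)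
      qed
    qed
  qed
qed

end
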